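(* In the affine setting described in the context, fix a base point $\eta\in A$. Then the linear span of $\{\beta_{\zeta,\eta}:\zeta\in A\}$ (each regarded, via its canonical extension, as a function on $\hat{Q}$) is dense in $\mathrm{L}^2(\hat{Q},\nu_Q)$.
   Context: $A$ is a real affine space over the vector space $L$. $\theta:A\times L\to\mathbb{R}$ is linear in the second argument and there is a bilinear $[\cdot,\cdot]:L\times L\to\mathbb{R}$ with $\theta(\eta+\xi,\tau)=\theta(\eta,\tau)+[\xi,\tau]$; $\omega(\xi,\xi')=\frac12[\xi,\xi']-\frac12[\xi',\xi]$ is non-degenerate. $M=\{\tau:[\xi,\tau]=0\ \forall\xi\in L\}$, $N=\{\tau:[\tau,\xi]=0\ \forall\xi\in L\}$, $L=M\oplus N$ assumed, $Q=L/M$ with quotient map $q$; $[\cdot,\cdot]$ descends to $L\times Q\to\mathbb{R}$. $\Omega:Q\times Q\to\mathbb{C}$ is symmetric bilinear with positive definite real part and admissible: $Q$ with inner product $\Re\Omega$ is a separable real Hilbert space, $\Im\Omega$ is continuous, each $\phi\mapsto[\xi,\phi]$ ($\xi\in L$) is continuous on $Q$, and every continuous linear functional on $Q$ has this form. $\hat{Q}$ is the algebraic dual of the topological dual $Q^*$, containing $Q$ canonically, with the initial topology of the evaluations at elements of $Q^*$; $\nu_Q$ is the Gaussian probability measure on $\hat{Q}$ with $\int\exp(\mathrm{i}x(\ell))\,\mathrm{d}\nu_Q(x)=\exp(-\frac14\|\ell\|^2)$ for $\ell\in Q^*$. For $\zeta,\eta\in A$, $\beta_{\zeta,\eta}$ is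 the continuous function on $Q$ $$\beta_{\zeta,\eta}(\phi)=\exp\Big(\mathrm{i}\theta(\zeta,\eta-\zeta)-\tfrac12\Omega(q(\eta-\zeta),q(\eta-\zeta))-\mathrm{i}[\eta-\zeta,\phi]-\Omega(q(\eta-\zeta),\phi)\Big),$$ extended canonically to a continuous function on $\hat{Q}$ (it depends on $\phi$ only through finitely many continuous linear functionals, hence factors through a finite-dimensional quotient of $Q$, which is also a quotient of $\hat{Q}$). $\beta_{\zeta,\eta}$ is the $\eta$-reduced Schrödinger wave function of the affine coherent state associated with $\zeta$. *)

theory Defs
  imports "HOL-Analysis.Analysis" "HOL-Probability.Probability"
begin

definition affine_action :: "('a \<Rightarrow> 'l::real_vector \<Rightarrow> 'a) \<Rightarrow> bool" where
  "affine_action vadd \<longleftrightarrow>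
     (\<forall>p. vadd p 0 = p) \<and>
     (\<forall>p u v. vadd (vadd p u) v = vadd p (u + v)) \<and>
     (\<forall>p p'. \<exists>!u. vadd p u = p')"

(* Difference vector: vsub vadd eta zeta is the unique u with zeta + u = eta, i.e. eta - zeta. *)
definition vsub :: "('a \<Rightarrow> 'l::real_vector \<Rightarrow> 'a) \<Rightarrow> 'a \<Rightarrow> 'a \<Rightarrow> 'l" where
  "vsub vadd eta zeta = (THE u. vadd zeta u = eta)"

definition Mset :: "('l \<Rightarrow> 'l \<Rightarrow> real) \<Rightarrow> 'l set" where
  "Mset br = {\<tau>. \<forall>\<xi>. br \<xi> \<tau> = 0}"

definition Nset :: "('l \<Rightarrow> 'l \<Rightarrow> real) \<Rightarrow> 'l set" where
  "Nset br = {\<tau>. \<forall>\<xi>. br \<tau> \<xi> = 0}"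

definition omega :: "('l \<Rightarrow> 'l \<Rightarrow> real) \<Rightarrow> 'l \<Rightarrow> 'l \<Rightarrow> real" where
  "omega br \<xi> \<xi>' = br \<xi> \<xi>' / 2 - br \<xi>' \<xi> / 2"

(* The bracket descended to L x Q (well defined since ker q = M). *)
definition brQ :: "('l \<Rightarrow> 'l \<Rightarrow> real) \<Rightarrow> ('l \<Rightarrow> 'q) \<Rightarrow> 'l \<Rightarrow> 'q \<Rightarrow> real" where
  "brQ br q \<xi> \<phi> = br \<xi> (SOME \<tau>. q \<tau> = \<phi>)"

(* Qhat: algebraic dual of the topological dual Q* (here Q* = 'q \<Rightarrow>_L real). *)
definition Qhat :: "(('q::real_normed_vector \<Rightarrow>\<^sub>L real) \<Rightarrow> real) set" where
  "Qhat = {x. linear x}"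

definition embQ :: "'q::real_normed_vector \<Rightarrow> (('q \<Rightarrow>\<^sub>L real) \<Rightarrow> real)" where
  "embQ \<phi> = (\<lambda>l. blinfun_apply l \<phi>)"

definition Qhat_cyl :: "(('q::real_normed_vector \<Rightarrow>\<^sub>L real) \<Rightarrow> real) set set" where
  "Qhat_cyl = {{x \<in> Qhat. x l \<in> B} | l B. B \<in> sets borel}"

definition betaQ ::
  "('a \<Rightarrow> 'l::real_vector \<Rightarrow> 'a) \<Rightarrow> ('a \<Rightarrow> 'l \<Rightarrow> real) \<Rightarrow> ('l \<Rightarrow> 'l \<Rightarrow> real)
   \<Rightarrow> ('l \<Rightarrow> 'q) \<Rightarrow> ('q \<Rightarrow> 'q \<Rightarrow> complex) \<Rightarrow> 'a \<Rightarrow> 'a \<Rightarrow> 'q \<Rightarrow> complex" where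
  "betaQ vadd \<theta> br q \<Omega> \<zeta> \<eta> \<phi> =
     (let u = vsub vadd \<eta> \<zeta>; v = q u in
      exp (\<i> * of_real (\<theta> \<zeta> u) - \<Omega> v v / 2 - \<i> * of_real (brQ br q u \<phi>) - \<Omega> v \<phi>))"

(* Canonical extension of beta_{zeta,eta} to Qhat: beta depends on phi only through
  the continuous linear functionals phi |-> [eta-zeta, phi], phi |-> Re Omega(v,phi) = <v,phi>
  and phi |-> Im Omega(v,phi); on Qhat these are replaced by evaluation of x at them. *)
definition betahat ::
  "('a \<Rightarrow> 'l::real_vector \<Rightarrow> 'a) \<Rightarrow> ('a \<Rightarrow> 'l \<Rightarrow> real) \<Rightarrow> ('l \<Rightarrow> 'l \<Rightarrow> real)
   \<Rightarrow> ('l \<Rightarrow> 'q::real_inner) \<Rightarrow> ('q \<Rightarrow> 'q \<Rightarrow> complex) \<Rightarrow> 'a \<Rightarrow> 'a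
   \<Rightarrow> (('q \<Rightarrow>\<^sub>L real) \<Rightarrow> real) \<Rightarrow> complex" where
  "betahat vadd \<theta> br q \<Omega> \<zeta> \<eta> x =
     (let u = vsub vadd \<eta> \<zeta>; v = q u in
      exp (\<i> * of_real (\<theta> \<zeta> u) - \<Omega> v v / 2
           - \<i> * of_real (x (Blinfun (brQ br q u)))
           - (of_real (x (Blinfun (\<lambda>\<phi>. inner v \<phi>)))
              + \<i> * of_real (x (Blinfun (\<lambda>\<phi>. Im (\<Omega> v \<phi>)))))))"

end

theory Submission
  imports Defs
begin


lemma sq_add_le: "(cmod (a + b))\<^sup>2 \<le> 2 * (cmod a)\<^sup>2 + 2 * (cmod b)\<^sup>2"
proof -
  have "cmod (a+b) \<le> cmod a + cmod b" by (rule norm_triangle_ineq)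
  then have "(cmod (a+b))\<^sup>2 \<le> (cmod a + cmod b)\<^sup>2" by (simp add: power_mono)
  also have "\<dots> \<le> 2 * (cmod a)\<^sup>2 + 2 * (cmod b)\<^sup>2"
  proof -
    have "0 \<le> (cmod a - cmod b)\<^sup>2" by simp
    then show ?thesis by (simp add: power2_diff power2_sum)
  qed
  finally show ?thesis .
qed

locale apxctx = prob_space M for M :: "'x measure" +
  fixes T :: "('x \<Rightarrow> complex) set"
  assumes T_meas: "g \<in> T \<Longrightarrow> g \<in> borel_measurable M"
    and T_bdd: "g \<in> T \<Longrightarrow> \<exists>K. \<forall>x\<in>space M. cmod (g x) \<le> K"
    and T_add: "g \<in> T \<Longrightarrow> h \<in> T \<Longrightarrow> (\<lambda>x. g x + h x) \<in> T"
    and T_scale: "g \<in> T \<Longrightarrow> (\<lambda>x. c * g x) \<in> T"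
    and T_one: "(\<lambda>x. 1) \<in> T"
begin

definition apx :: "('x \<Rightarrow> complex) \<Rightarrow> bool" where
  "apx g \<longleftrightarrow> (\<forall>e>0. \<exists>p\<in>T. integrable M (\<lambda>x. (cmod (g x - p x))\<^sup>2) \<and>
                         (\<integral>x. (cmod (g x - p x))\<^sup>2 \<partial>M) < e)"

lemma T_zero: "(\<lambda>x. 0) \<in> T"
  using T_scale[OF T_one, of 0] by simp

lemma apx_T: assumes "p \<in> T" shows "apx p"
  unfolding apx_def using assms by (intro allI impI bexI[of _ p]) auto

lemma apx_cong: assumes "apx g" "\<And>x. x \<in> space M \<Longrightarrow> g x = h x" shows "apx h"
  unfolding apx_def
proof (intro allI impI)
  fix e :: real assume "e > 0"
  then obtain p where p: "p \<in> T" "integrable M (\<lambda>x. (cmod (g x - p x))\<^sup>2)"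
     "(\<integral>x. (cmod (g x - p x))\<^sup>2 \<partial>M) < e" using assms(1) unfolding apx_def by blast
  have "integrable M (\<lambda>x. (cmod (h x - p x))\<^sup>2) = integrable M (\<lambda>x. (cmod (g x - p x))\<^sup>2)"
    by (rule Bochner_Integration.integrable_cong[OF refl]) (auto simp: assms(2))
  then have "integrable M (\<lambda>x. (cmod (h x - p x))\<^sup>2)" using p(2) by simp
  moreover have "(\<integral>x. (cmod (h x - p x))\<^sup>2 \<partial>M) = (\<integral>x. (cmod (g x - p x))\<^sup>2 \<partial>M)"
    by (rule Bochner_Integration.integral_cong[OF refl]) (auto simp: assms(2))
  ultimately show "\<exists>p\<in>T. integrable M (\<lambda>x. (cmod (h x - p x))\<^sup>2) \<and> (\<integral>x. (cmod (h x - p x))\<^sup>2 \<partial>M) < e"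
    using p by auto
qed

lemma int_sq_comb:
  assumes mf: "f \<in> borel_measurable M" and mg: "g \<in> borel_measurable M"
    and i1: "integrable M (\<lambda>x. (cmod (f x))\<^sup>2)" and i2: "integrable M (\<lambda>x. (cmod (g x))\<^sup>2)"
  shows "integrable M (\<lambda>x. (cmod (f x + g x))\<^sup>2)"
    and "(\<integral>x. (cmod (f x + g x))\<^sup>2 \<partial>M) \<le> 2 * (\<integral>x. (cmod (f x))\<^sup>2 \<partial>M) + 2 * (\<integral>x. (cmod (g x))\<^sup>2 \<partial>M)"
proof -
  have ib: "integrable M (\<lambda>x. 2 * (cmod (f x))\<^sup>2 + 2 * (cmod (g x))\<^sup>2)"
    using i1 i2 by auto
  show int: "integrable M (\<lambda>x. (cmod (f x + g x))\<^sup>2)"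
    by (rule Bochner_Integration.integrable_bound[OF ib]) (use mf mg sq_add_le in auto)
  have "(\<integral>x. (cmod (f x + g x))\<^sup>2 \<partial>M) \<le> (\<integral>x. 2 * (cmod (f x))\<^sup>2 + 2 * (cmod (g x))\<^sup>2 \<partial>M)"
    by (rule integral_mono[OF int ib]) (rule sq_add_le)
  also have "\<dots> = 2 * (\<integral>x. (cmod (f x))\<^sup>2 \<partial>M) + 2 * (\<integral>x. (cmod (g x))\<^sup>2 \<partial>M)"
    using i1 i2 by simp
  finally show "(\<integral>x. (cmod (f x + g x))\<^sup>2 \<partial>M) \<le> 2 * (\<integral>x. (cmod (f x))\<^sup>2 \<partial>M) + 2 * (\<integral>x. (cmod (g x))\<^sup>2 \<partial>M)" .
qed

lemma apx_add:
  assumes mg: "g \<in> borel_measurable M" and mh: "h \<in> borel_measurable M" and "apx g" "apx h"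
  shows "apx (\<lambda>x. g x + h x)"
  unfolding apx_def
proof (intro allI impI)
  fix e :: real assume e: "e > 0"
  obtain p where p: "p \<in> T" "integrable M (\<lambda>x. (cmod (g x - p x))\<^sup>2)"
     "(\<integral>x. (cmod (g x - p x))\<^sup>2 \<partial>M) < e/4" using assms(3) e unfolding apx_def
    by (meson divide_pos_pos zero_less_numeral)
  obtain q where q: "q \<in> T" "integrable M (\<lambda>x. (cmod (h x - q x))\<^sup>2)"
     "(\<integral>x. (cmod (h x - q x))\<^sup>2 \<partial>M) < e/4" using assms(4) e unfolding apx_def
    by (meson divide_pos_pos zero_less_numeral)
  have eq: "(\<lambda>x. (cmod (g x + h x - (p x + q x)))\<^sup>2) = (\<lambda>x. (cmod ((g x - p x) + (h x - q x)))\<^sup>2)"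
    by (simp add: algebra_simps)
  have m: "(\<lambda>x. g x - p x) \<in> borel_measurable M" "(\<lambda>x. h x - q x) \<in> borel_measurable M"
    using mg mh T_meas[OF p(1)] T_meas[OF q(1)] by auto
  note c = int_sq_comb[OF m p(2) q(2)]
  show "\<exists>r\<in>T. integrable M (\<lambda>x. (cmod (g x + h x - r x))\<^sup>2) \<and> (\<integral>x. (cmod (g x + h x - r x))\<^sup>2 \<partial>M) < e"
  proof (intro bexI[of _ "\<lambda>x. p x + q x"] conjI)
    show "integrable M (\<lambda>x. (cmod (g x + h x - (p x + q x)))\<^sup>2)" unfolding eq by (rule c(1))
    show "(\<integral>x. (cmod (g x + h x - (p x + q x)))\<^sup>2 \<partial>M) < e" unfolding eq using c(2) p(3) q(3) by linarith
  qed (rule T_add[OF p(1) q(1)])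
qed

lemma apx_scale:
  assumes "apx g" shows "apx (\<lambda>x. c * g x)"
  unfolding apx_def
proof (intro allI impI)
  fix e :: real assume e: "e > 0"
  have "e / ((cmod c)\<^sup>2 + 1) > 0" using e by (simp add: add_nonneg_pos)
  then obtain p where p: "p \<in> T" "integrable M (\<lambda>x. (cmod (g x - p x))\<^sup>2)"
     "(\<integral>x. (cmod (g x - p x))\<^sup>2 \<partial>M) < e / ((cmod c)\<^sup>2 + 1)" using assms unfolding apx_def by blast
  have eq: "(\<lambda>x. (cmod (c * g x - c * p x))\<^sup>2) = (\<lambda>x. (cmod c)\<^sup>2 * (cmod (g x - p x))\<^sup>2)"
    by (simp add: norm_mult power_mult_distrib flip: right_diff_distrib)
  have "(cmod c)\<^sup>2 * (\<integral>x. (cmod (g x - p x))\<^sup>2 \<partial>M) \<le> ((cmod c)\<^sup>2 + 1) * (\<integral>x. (cmod (g x - p x))\<^sup>2 \<partial>M)"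
    by (intro mult_right_mono) auto
  also have "\<dots> < e"
  proof -
    have dpos: "(cmod c)\<^sup>2 + 1 > 0" by (simp add: add_nonneg_pos)
    show ?thesis using p(3) by (metis mult.commute pos_less_divide_eq dpos)
  qed
  finally show "\<exists>r\<in>T. integrable M (\<lambda>x. (cmod (c * g x - r x))\<^sup>2) \<and> (\<integral>x. (cmod (c * g x - r x))\<^sup>2 \<partial>M) < e"
    using p T_scale[OF p(1), of c] unfolding eq by (intro bexI[of _ "\<lambda>x. c * p x"]) (auto simp: eq)
qed

lemma apx_sum:
  assumes "finite I" "\<And>i. i \<in> I \<Longrightarrow> apx (G i)" "\<And>i. i \<in> I \<Longrightarrow> G i \<in> borel_measurable M"
  shows "apx (\<lambda>x. \<Sum>i\<in>I. G i x)"
  using assms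
proof (induction I rule: finite_induct)
  case empty then show ?case using apx_T[OF T_zero] by simp
next
  case (insert i I)
  have "apx (\<lambda>x. G i x + (\<Sum>i\<in>I. G i x))"
    by (rule apx_add) (use insert in auto)
  then show ?case using insert by simp
qed

lemma apx_limit:
  assumes mg: "g \<in> borel_measurable M" and mG: "\<And>n. G n \<in> borel_measurable M"
    and aG: "\<And>n. apx (G n)" and iG: "\<And>n. integrable M (\<lambda>x. (cmod (g x - G n x))\<^sup>2)"
    and lim: "(\<lambda>n. \<integral>x. (cmod (g x - G n x))\<^sup>2 \<partial>M) \<longlonglongrightarrow> 0"
  shows "apx g"
  unfolding apx_def
proof (intro allI impI)
  fix e :: real assume e: "e > 0"
  have "\<forall>\<^sub>F n in sequentially. (\<integral>x. (cmod (g x - G n x))\<^sup>2 \<partial>M) < e/4"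
    using lim[THEN order_tendstoD(2), of "e/4"] e by simp
  then obtain N where "\<forall>n\<ge>N. (\<integral>x. (cmod (g x - G n x))\<^sup>2 \<partial>M) < e/4"
    by (auto simp: eventually_sequentially)
  then obtain n where n: "(\<integral>x. (cmod (g x - G n x))\<^sup>2 \<partial>M) < e/4" by blast
  obtain p where p: "p \<in> T" "integrable M (\<lambda>x. (cmod (G n x - p x))\<^sup>2)"
     "(\<integral>x. (cmod (G n x - p x))\<^sup>2 \<partial>M) < e/4" using aG[of n] e unfolding apx_def
    by (meson divide_pos_pos zero_less_numeral)
  have eq: "(\<lambda>x. (cmod (g x - p x))\<^sup>2) = (\<lambda>x. (cmod ((g x - G n x) + (G n x - p x)))\<^sup>2)" by simp
  have m: "(\<lambda>x. g x - G n x) \<in> borel_measurable M" "(\<lambda>x. G n x - p x) \<in> borel_measurable M"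
    using mg mG T_meas[OF p(1)] by auto
  note c = int_sq_comb[OF m iG p(2)]
  show "\<exists>r\<in>T. integrable M (\<lambda>x. (cmod (g x - r x))\<^sup>2) \<and> (\<integral>x. (cmod (g x - r x))\<^sup>2 \<partial>M) < e"
  proof (intro bexI[of _ p] conjI)
    show "integrable M (\<lambda>x. (cmod (g x - p x))\<^sup>2)" unfolding eq by (rule c(1))
    show "(\<integral>x. (cmod (g x - p x))\<^sup>2 \<partial>M) < e" unfolding eq using c(2) p(3) n by linarith
  qed (rule p(1))
qed

end



context apxctx begin

lemma ind_sum_disj:
  fixes A :: "nat \<Rightarrow> 'x set"
  assumes "disjoint_family A"
  shows "(\<Sum>i<n. indicator (A i) x :: complex) = indicator (\<Union>i<n. A i) x"
proof (induction n)
  case 0 then show ?case by simp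
next
  case (Suc n)
  have dis: "x \<in> A n \<Longrightarrow> x \<notin> (\<Union>i<n. A i)"
    using assms unfolding disjoint_family_on_def by (auto) (metis IntI empty_iff nat_neq_iff)
  have "(\<Union>i<Suc n. A i) = A n \<union> (\<Union>i<n. A i)" by (auto simp: lessThan_Suc)
  then show ?case using Suc dis by (auto simp: indicator_def)
qed

lemma apx_sets:
  assumes G: "Int_stable G" "G \<subseteq> Pow (space M)" "sets M = sigma_sets (space M) G"
    and base: "\<And>A. A \<in> G \<Longrightarrow> apx (indicator A)"
    and A: "A \<in> sets M"
  shows "apx (indicator A)"
proof -
  from A G(3) have AA: "A \<in> sigma_sets (space M) G" by simp
  from G(1,2) AA show ?thesis
  proof (induction rule: sigma_sets_induct_disjoint)
    case (basic A) then show ?case by (rule base)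
  next
    case empty then show ?case using apx_T[OF T_zero] by simp
  next
    case (compl A)
    have As: "A \<in> sets M" using compl(1) G(3) by simp
    have a: "apx (\<lambda>x. (-1) * indicator A x)" by (rule apx_scale[OF compl(2)])
    have "apx (\<lambda>x. 1 + ((-1) * indicator A x))"
      by (rule apx_add[OF _ _ apx_T[OF T_one] a]) (use As in auto)
    then show ?case by (rule apx_cong) (auto simp: indicator_def)
  next
    case (union A)
    have As: "\<And>i. A i \<in> sets M" using union(2) G(3) by auto
    define U where "U = (\<Union>i. A i)"
    define Vn where "Vn n = (\<Union>i<n. A i)" for n
    have Us: "U \<in> sets M" unfolding U_def using As by auto
    have Uns: "\<And>n. Vn n \<in> sets M" unfolding Vn_def by (intro sets.finite_UN) (auto simp: As)
    have apxn: "apx (indicator (Vn n))" for n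
    proof -
      have "apx (\<lambda>x. \<Sum>i\<in>{..<n}. indicator (A i) x)"
        by (rule apx_sum) (use union(3) As in auto)
      then show ?thesis unfolding Vn_def
        by (rule apx_cong) (simp add: ind_sum_disj[OF union(1)])
    qed
    have sub: "Vn n \<subseteq> U" for n unfolding Vn_def U_def by auto
    have eqd: "(\<lambda>x. (cmod (indicator U x - indicator (Vn n) x :: complex))\<^sup>2) = indicator (U - Vn n)" for n
      using sub[of n] by (auto simp: indicator_def fun_eq_iff)
    show ?case unfolding U_def[symmetric]
    proof (rule apx_limit[where G = "\<lambda>n. indicator (Vn n)"])
      show "indicator U \<in> borel_measurable M" using Us by simp
      show "indicator (Vn n) \<in> borel_measurable M" for n using Uns by simp
      show "apx (indicator (Vn n))" for n by (rule apxn)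
      show "integrable M (\<lambda>x. (cmod (indicator U x - indicator (Vn n) x))\<^sup>2)" for n
        unfolding eqd
      proof (intro integrable_real_indicator)
        show "U - Vn n \<in> sets M" using Us Uns by auto
        show "emeasure M (U - Vn n) < \<infinity>" by (simp add: less_top[symmetric])
      qed
      have "(\<lambda>n. measure M (U - Vn n)) \<longlonglongrightarrow> measure M (\<Inter>n. U - Vn n)"
      proof (rule finite_Lim_measure_decseq)
        show "range (\<lambda>n. U - Vn n) \<subseteq> sets M" using Us Uns by auto
        show "decseq (\<lambda>n. U - Vn n)" unfolding decseq_def Vn_def by auto
      qed
      moreover have "(\<Inter>n. U - Vn n) = {}" unfolding U_def Vn_def by auto
      ultimately have "(\<lambda>n. measure M (U - Vn n)) \<longlonglongrightarrow> 0" by (metis measure_empty)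
      moreover have "measure M (U - Vn n) = (\<integral>x. (cmod (indicator U x - indicator (Vn n) x))\<^sup>2 \<partial>M)" for n
        unfolding eqd using Us Uns sets.sets_into_space[OF Us] by (simp add: Int_absorb2 Diff_subset[THEN subset_trans])
      ultimately show "(\<lambda>n. \<integral>x. (cmod (indicator U x - indicator (Vn n) x))\<^sup>2 \<partial>M) \<longlonglongrightarrow> 0" by simp
    qed
  qed
qed

lemma apx_all:
  assumes sets_apx: "\<And>A. A \<in> sets M \<Longrightarrow> apx (indicator A)"
    and mf: "f \<in> borel_measurable M" and sqf: "integrable M (\<lambda>x. (cmod (f x))\<^sup>2)"
  shows "apx f"
proof -
  obtain F where F: "\<And>i. simple_function M (F i)" "\<And>x. x \<in> space M \<Longrightarrow> (\<lambda>i. F i x) \<longlonglongrightarrow> f x"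
    "\<And>i x. x \<in> space M \<Longrightarrow> cmod (F i x) \<le> 2 * cmod (f x)"
    using borel_measurable_implies_sequence_metric[OF mf, of 0] unfolding dist_norm by simp metis
  have mF: "F i \<in> borel_measurable M" for i using F(1) by (rule borel_measurable_simple_function)
  have aF: "apx (F i)" for i
  proof -
    let ?S = "F i ` space M"
    have "apx (\<lambda>x. \<Sum>y\<in>?S. y * indicator (F i -` {y} \<inter> space M) x)"
    proof (rule apx_sum)
      show "finite ?S" using simple_functionD(1)[OF F(1)] .
      show "apx (\<lambda>x. y * indicator (F i -` {y} \<inter> space M) x)" for y
        by (rule apx_scale, rule sets_apx, rule simple_functionD(2)[OF F(1)])
      show "(\<lambda>x. y * indicator (F i -` {y} \<inter> space M) x) \<in> borel_measurable M" for y
        using simple_functionD(2)[OF F(1)] by simp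
    qed
    then show ?thesis
    proof (rule apx_cong)
      fix x assume x: "x \<in> space M"
      have "(\<Sum>y\<in>?S. y * indicator (F i -` {y} \<inter> space M) x) = (\<Sum>y\<in>?S. if y = F i x then y else 0)"
        using x by (intro sum.cong) (auto simp: indicator_def)
      also have "\<dots> = F i x" using x simple_functionD(1)[OF F(1)] by (simp add: sum.delta')
      finally show "(\<Sum>y\<in>?S. y * indicator (F i -` {y} \<inter> space M) x) = F i x" .
    qed
  qed
  have bnd: "AE x in M. norm ((cmod (f x - F i x))\<^sup>2) \<le> 9 * (cmod (f x))\<^sup>2" for i
  proof (rule AE_I2)
    fix x assume x: "x \<in> space M"
    have "cmod (f x - F i x) \<le> cmod (f x) + cmod (F i x)" by (rule norm_triangle_ineq4)
    also have "\<dots> \<le> 3 * cmod (f x)" using F(3)[OF x, of i] by simp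
    finally have "(cmod (f x - F i x))\<^sup>2 \<le> (3 * cmod (f x))\<^sup>2" by (intro power_mono) auto
    then show "norm ((cmod (f x - F i x))\<^sup>2) \<le> 9 * (cmod (f x))\<^sup>2" by (simp add: power_mult_distrib)
  qed
  have lim: "AE x in M. (\<lambda>i. (cmod (f x - F i x))\<^sup>2) \<longlonglongrightarrow> 0"
  proof (rule AE_I2)
    fix x assume x: "x \<in> space M"
    have "(\<lambda>i. f x - F i x) \<longlonglongrightarrow> f x - f x" by (rule tendsto_diff[OF tendsto_const F(2)[OF x]])
    then have "(\<lambda>i. (cmod (f x - F i x))\<^sup>2) \<longlonglongrightarrow> (cmod (f x - f x))\<^sup>2" by (rule tendsto_power[OF tendsto_norm])
    then show "(\<lambda>i. (cmod (f x - F i x))\<^sup>2) \<longlonglongrightarrow> 0" by simp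
  qed
  have iw: "integrable M (\<lambda>x. 9 * (cmod (f x))\<^sup>2)" using sqf by simp
  have mm: "(\<lambda>x. (cmod (f x - F i x))\<^sup>2) \<in> borel_measurable M" for i using mf mF[of i] by simp
  note dc = integral_dominated_convergence[OF _ mm iw lim bnd] integrable_dominated_convergence2[OF _ mm iw lim bnd]
  show ?thesis
  proof (rule apx_limit[OF mf mF aF])
    show "integrable M (\<lambda>x. (cmod (f x - F n x))\<^sup>2)" for n using dc(2) by simp
    show "(\<lambda>n. \<integral>x. (cmod (f x - F n x))\<^sup>2 \<partial>M) \<longlonglongrightarrow> 0" using dc(1) by simp
  qed
qed

end



definition tq :: "(complex \<times> real) list \<Rightarrow> real \<Rightarrow> complex" where
  "tq cs t = (\<Sum>(c,s)\<leftarrow>cs. c * cis (s * t))"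

lemma sum_list_prod:
  "(\<Sum>a\<leftarrow>xs. f a) * (\<Sum>b\<leftarrow>ys. g b) = (\<Sum>(a,b)\<leftarrow>List.product xs ys. f a * g b :: 'r::comm_ring)"
  by (induction xs) (auto simp: algebra_simps sum_list_const_mult o_def)

lemma tq_append: "tq (cs @ ds) t = tq cs t + tq ds t"
  unfolding tq_def by simp

lemma tq_mult: "tq cs t * tq ds t = tq (map (\<lambda>((c,s),(d,r)). (c*d, s+r)) (List.product cs ds)) t"
  unfolding tq_def sum_list_prod
  by (simp add: o_def case_prod_unfold cis_mult[symmetric] algebra_simps)

lemma bl_complex: assumes "bounded_linear (f :: complex \<Rightarrow> real)"
  shows "f z = Re z * f 1 + Im z * f \<i>"
proof -
  interpret bounded_linear f by fact
  have "z = Re z *\<^sub>R 1 + Im z *\<^sub>R \<i>" by (simp add: complex_eq_iff)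
  then have "f z = f (Re z *\<^sub>R 1 + Im z *\<^sub>R \<i>)" by simp
  also have "\<dots> = Re z * f 1 + Im z * f \<i>" by (simp add: add scale)
  finally show ?thesis .
qed

lemma tq_lin: assumes "bounded_linear (f::complex\<Rightarrow>real)" shows "complex_of_real (f (cis (w * t))) = tq [((f 1 - \<i> * f \<i>)/2, w), ((f 1 + \<i> * f \<i>)/2, -w)] t"
      unfolding tq_def bl_complex[OF assms, of "cis (w*t)"]
      apply (simp add: complex_eq_iff algebra_simps)
      apply (subst add_divide_distrib[symmetric])
      apply simp
      done

lemma tq_poly:
  assumes "real_polynomial_function (g :: complex \<Rightarrow> real)"
  shows "\<exists>cs. \<forall>t. complex_of_real (g (cis (w * t))) = tq cs t"
  using assms
proof (induction g rule: real_polynomial_function.induct)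
  case (linear f)
  let ?a = "f 1" and ?b = "f \<i>"
  show ?case
  proof (intro exI[of _ "[((?a - \<i> * ?b)/2, w), ((?a + \<i> * ?b)/2, -w)]"] allI)
    fix t
    show "complex_of_real (f (cis (w * t))) = tq [((?a - \<i> * ?b)/2, w), ((?a + \<i> * ?b)/2, -w)] t"
      by (rule tq_lin[OF linear])
  qed
next
  case (const c)
  show ?case by (intro exI[of _ "[(complex_of_real c, 0)]"]) (simp add: tq_def)
next
  case (add f g)
  then obtain cs ds where "\<forall>t. complex_of_real (f (cis (w * t))) = tq cs t"
     "\<forall>t. complex_of_real (g (cis (w * t))) = tq ds t" by blast
  then show ?case by (intro exI[of _ "cs @ ds"]) (simp add: tq_append)
next
  case (mult f g)
  then obtain cs ds where "\<forall>t. complex_of_real (f (cis (w * t))) = tq cs t"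
     "\<forall>t. complex_of_real (g (cis (w * t))) = tq ds t" by blast
  then show ?case by (intro exI[of _ "map (\<lambda>((c,s),(d,r)). (c*d, s+r)) (List.product cs ds)"]) (simp add: tq_mult[symmetric])
qed




lemma decseq_meas_small:
  assumes "finite_measure M" "range B \<subseteq> sets M" "decseq B" "(\<Inter>n. B n) = {}" "e > 0"
  shows "\<exists>N. \<forall>n\<ge>N. measure M (B n) < e"
proof -
  interpret finite_measure M by fact
  have "(\<lambda>n. measure M (B n)) \<longlonglongrightarrow> measure M (\<Inter>n. B n)"
    by (rule finite_Lim_measure_decseq) (use assms in auto)
  then have "(\<lambda>n. measure M (B n)) \<longlonglongrightarrow> 0" using assms(4) by simp
  from order_tendstoD(2)[OF this assms(5)] show ?thesis by (simp add: eventually_sequentially)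
qed

definition Hc :: "real \<Rightarrow> real \<Rightarrow> complex \<Rightarrow> real" where
  "Hc s0 s1 z = max 0 (min 1 ((s1 - Im z) / (s1 - s0))) * max 0 (min 1 (Re z / cos (1/2)))"

lemma Hc_range: "0 \<le> Hc s0 s1 z \<and> Hc s0 s1 z \<le> 1"
  unfolding Hc_def by (auto intro!: mult_le_one)

lemma cont_Hc: "continuous_on S (Hc s0 s1)"
  unfolding Hc_def divide_inverse by (intro continuous_intros)

lemma cos_half_pos: "cos (1/2::real) > 0"
  using pi_ge_two by (intro cos_gt_zero_pi) auto

lemma onedim:
  assumes P: "prob_space M" and X: "X \<in> borel_measurable M" and e: "e > 0"
  shows "\<exists>cs. (\<forall>t. cmod (tq cs t) \<le> 2) \<and>
     integrable M (\<lambda>x. (cmod ((if X x \<le> a then 1 else 0) - tq cs (X x)))\<^sup>2) \<and>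
     (\<integral>x. (cmod ((if X x \<le> a then 1 else 0) - tq cs (X x)))\<^sup>2 \<partial>M) < e"
proof -
  interpret prob_space M by fact
  have fm: "finite_measure M" by unfold_locales
  define B where "B n = {x\<in>space M. real n < \<bar>X x\<bar>}" for n :: nat
  have Bs: "range B \<subseteq> sets M" unfolding B_def using X by auto
  have "\<exists>N. \<forall>n\<ge>N. measure M (B n) < e/8"
  proof (rule decseq_meas_small[OF fm Bs])
    show "decseq B" unfolding B_def decseq_def by auto
    show "(\<Inter>n. B n) = {}"
    proof (rule ccontr)
      assume "(\<Inter>n. B n) \<noteq> {}"
      then obtain x where "\<forall>n. x \<in> B n" by auto
      then have "\<forall>n::nat. real n < \<bar>X x\<bar>" unfolding B_def by auto
      then show False using reals_Archimedean2[of "\<bar>X x\<bar>"] by (meson less_asym)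
    qed
  qed (use e in auto)
  then obtain N0 where N0: "\<And>n. n \<ge> N0 \<Longrightarrow> measure M (B n) < e/8" by blast
  define n where "n = max N0 (nat \<lceil>\<bar>a\<bar>\<rceil> + 1)"
  define R where "R = real n"
  have R1: "\<bar>a\<bar> + 1 \<le> R" unfolding R_def n_def by (simp add: of_nat_max) linarith
  have BR: "measure M (B n) < e/8" using N0 n_def by auto
  define C where "C k = {x\<in>space M. a < X x \<and> X x < a + 1 / (real k + 1)}" for k :: nat
  have Cs: "range C \<subseteq> sets M" unfolding C_def using X by auto
  have "\<exists>N. \<forall>k\<ge>N. measure M (C k) < e/8"
  proof (rule decseq_meas_small[OF fm Cs])
    show "decseq C" unfolding C_def decseq_def
    proof (intro allI impI subsetI)
      fix m k x assume "m \<le> k" "x \<in> {x \<in> space M. a < X x \<and> X x < a + 1 / (real k + 1)}"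
      moreover have "1 / (real k + 1) \<le> 1 / (real m + 1)" using \<open>m \<le> k\<close> by (simp add: frac_le)
      ultimately show "x \<in> {x \<in> space M. a < X x \<and> X x < a + 1 / (real m + 1)}" by auto
    qed
    show "(\<Inter>k. C k) = {}"
    proof (rule ccontr)
      assume "(\<Inter>k. C k) \<noteq> {}"
      then obtain x where x: "\<forall>k. x \<in> C k" by auto
      then have ax: "a < X x" unfolding C_def by auto
      obtain k :: nat where k: "inverse (real (Suc k)) < X x - a"
        using reals_Archimedean[of "X x - a"] ax by auto
      have "X x < a + 1 / (real k + 1)" using x unfolding C_def by auto
      then show False using k by (simp add: field_simps)
    qed
  qed (use e in auto)
  then obtain N1 where N1: "measure M (C N1) < e/8" by blast
  define \<delta> where "\<delta> = 1 / (real N1 + 1)"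
  have d0: "0 < \<delta>" "\<delta> \<le> 1" unfolding \<delta>_def by auto
  have CR: "C N1 = {x\<in>space M. a < X x \<and> X x < a + \<delta>}" unfolding C_def \<delta>_def by simp
  have Rpos: "R > 0" using R1 by linarith
  define w where "w = 1 / (2 * R)"
  have w0: "w > 0" unfolding w_def using Rpos by simp
  have wt: "\<bar>w * t\<bar> \<le> 1/2" if "\<bar>t\<bar> \<le> R" for t
    using that Rpos unfolding w_def by (simp add: abs_mult field_simps)
  have pih: "1/2 \<le> pi/2" using pi_ge_two by simp
  define s0 where "s0 = sin (w * a)"
  define s1 where "s1 = sin (w * (a + \<delta>))"
  have wa: "\<bar>w * a\<bar> \<le> 1/2" by (rule wt) (use R1 in auto)
  have wad: "\<bar>w * (a + \<delta>)\<bar> \<le> 1/2" by (rule wt) (use R1 d0 in auto)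
  have s01: "s0 < s1" unfolding s0_def s1_def
    by (rule sin_monotone_2pi) (use wa wad pih w0 d0 in \<open>auto simp: abs_le_iff\<close>)
  define \<eta>0 where "\<eta>0 = min 1 (sqrt (e/16))"
  have eta0: "\<eta>0 > 0" "\<eta>0 \<le> 1" "\<eta>0\<^sup>2 \<le> e/16"
  proof -
    show "\<eta>0 > 0" "\<eta>0 \<le> 1" unfolding \<eta>0_def using e by auto
    have "\<eta>0\<^sup>2 \<le> (sqrt (e/16))\<^sup>2" unfolding \<eta>0_def
      by (intro power_mono) (use e in auto)
    then show "\<eta>0\<^sup>2 \<le> e/16" using e by simp
  qed
  obtain g where g: "polynomial_function g" "\<And>z. z \<in> sphere 0 1 \<Longrightarrow> norm (Hc s0 s1 z - g z) < \<eta>0"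
    using Stone_Weierstrass_polynomial_function[OF compact_sphere cont_Hc eta0(1), of 0 1 s0 s1] by blast
  obtain cs where cs: "\<And>t. complex_of_real (g (cis (w * t))) = tq cs t"
    using tq_poly[of g w] g(1) unfolding real_polynomial_function_eq by blast
  have gclose: "\<bar>Hc s0 s1 (cis (w * t)) - g (cis (w * t))\<bar> < \<eta>0" for t
    using g(2)[of "cis (w*t)"] by simp
  have bnd2: "cmod (tq cs t) \<le> 2" for t
  proof -
    have "cmod (tq cs t) = \<bar>g (cis (w * t))\<bar>" by (simp flip: cs)
    also have "\<dots> \<le> 2" using gclose[of t] Hc_range[of s0 s1 "cis (w*t)"] eta0(2) by linarith
    finally show ?thesis .
  qed
  define bad where "bad t \<longleftrightarrow> R < \<bar>t\<bar> \<or> (a < t \<and> t < a + \<delta>)" for t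
  have good: "(if t \<le> a then 1 else 0) = Hc s0 s1 (cis (w * t))" if nb: "\<not> bad t" for t
  proof -
    have tR: "\<bar>t\<bar> \<le> R" using nb unfolding bad_def by auto
    have wtt: "\<bar>w * t\<bar> \<le> 1/2" by (rule wt[OF tR])
    have "cos (1/2) \<le> cos \<bar>w * t\<bar>"
      by (rule cos_monotone_0_pi_le) (use wtt pi_ge_two in auto)
    then have "cos (1/2) \<le> cos (w * t)" by simp
    then have c1: "max 0 (min 1 (Re (cis (w * t)) / cos (1/2))) = 1"
      using cos_half_pos by (simp add: field_simps)
    show ?thesis
    proof (cases "t \<le> a")
      case True
      have "sin (w * t) \<le> s0" unfolding s0_def
        by (rule sin_monotone_2pi_le) (use wtt wa pih True w0 in \<open>auto simp: abs_le_iff intro: mult_left_mono\<close>)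
      then have "(s1 - Im (cis (w * t))) / (s1 - s0) \<ge> 1" using s01 by (simp add: field_simps)
      then show ?thesis using True c1 unfolding Hc_def by simp
    next
      case False
      then have ta: "a + \<delta> \<le> t" using nb unfolding bad_def by auto
      have "s1 \<le> sin (w * t)" unfolding s1_def
        by (rule sin_monotone_2pi_le) (use wtt wad pih ta w0 in \<open>auto simp: abs_le_iff intro: mult_left_mono\<close>)
      then have "(s1 - Im (cis (w * t))) / (s1 - s0) \<le> 0" using s01 by (simp add: divide_nonpos_pos)
      then show ?thesis using False c1 unfolding Hc_def by simp
    qed
  qed
  have ptw: "(cmod ((if t \<le> a then 1 else 0) - tq cs t))\<^sup>2 \<le> 2 * (if bad t then 1 else 0) + 2 * \<eta>0\<^sup>2" for t
  proof -
    let ?I = "(if t \<le> a then 1 else 0) :: real"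
    have eqc: "(if t \<le> a then 1 else 0) - tq cs t = complex_of_real (?I - g (cis (w * t)))"
      by (simp flip: cs)
    have "cmod ((if t \<le> a then 1 else 0) - tq cs t) = \<bar>?I - g (cis (w * t))\<bar>"
      unfolding eqc norm_of_real ..
    also have "\<dots> \<le> \<bar>?I - Hc s0 s1 (cis (w * t))\<bar> + \<bar>Hc s0 s1 (cis (w * t)) - g (cis (w * t))\<bar>" by linarith
    also have "\<dots> \<le> (if bad t then 1 else 0) + \<eta>0"
    proof -
      have "\<bar>?I - Hc s0 s1 (cis (w * t))\<bar> \<le> (if bad t then 1 else 0)"
        using good[of t] Hc_range[of s0 s1 "cis (w*t)"] by (cases "bad t") auto
      then show ?thesis using gclose[of t] by linarith
    qed
    finally have le: "cmod ((if t \<le> a then 1 else 0) - tq cs t) \<le> (if bad t then 1 else 0) + \<eta>0" .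
    have "(cmod ((if t \<le> a then 1 else 0) - tq cs t))\<^sup>2 \<le> ((if bad t then 1 else 0) + \<eta>0)\<^sup>2"
      by (rule power_mono[OF le]) simp
    also have "\<dots> \<le> 2 * (if bad t then 1 else 0)\<^sup>2 + 2 * \<eta>0\<^sup>2"
    proof -
      have "0 \<le> ((if bad t then 1 else 0) - \<eta>0)\<^sup>2" by simp
      then show ?thesis by (simp add: power2_diff power2_sum)
    qed
    finally show ?thesis by (cases "bad t") auto
  qed
  have badset: "{x\<in>space M. bad (X x)} = B n \<union> C N1"
    unfolding bad_def B_def CR R_def by auto
  have badm: "{x\<in>space M. bad (X x)} \<in> sets M" unfolding badset using Bs Cs by auto
  have mf: "(\<lambda>x. (cmod ((if X x \<le> a then 1 else 0) - tq cs (X x)))\<^sup>2) \<in> borel_measurable M"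
  proof -
    have "(\<lambda>x. complex_of_real (g (cis (w * X x)))) \<in> borel_measurable M"
    proof -
      have "continuous_on UNIV g" using g(1) by (rule continuous_on_polymonial_function)
      then have "g \<in> borel_measurable borel" by (rule borel_measurable_continuous_onI)
      moreover have "(\<lambda>x. cis (w * X x)) \<in> borel_measurable M" unfolding cis_conv_exp using X by measurable
      ultimately have "(\<lambda>x. g (cis (w * X x))) \<in> borel_measurable M"
        using measurable_compose by blast
      then show ?thesis by simp
    qed
    then have "(\<lambda>x. tq cs (X x)) \<in> borel_measurable M" by (simp add: cs)
    then show ?thesis using X by measurable
  qed
  have ib: "integrable M (\<lambda>x. 2 * indicator {x\<in>space M. bad (X x)} x + 2 * \<eta>0\<^sup>2)"
    using badm by (intro Bochner_Integration.integrable_add integrable_mult_right integrable_real_indicator) (auto simp: less_top[symmetric])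
  have le2: "(cmod ((if X x \<le> a then 1 else 0) - tq cs (X x)))\<^sup>2 \<le> 2 * indicator {x\<in>space M. bad (X x)} x + 2 * \<eta>0\<^sup>2"
    if "x \<in> space M" for x
  proof -
    have ie: "indicator {x\<in>space M. bad (X x)} x = (if bad (X x) then 1 else (0::real))"
      using that by (simp add: indicator_def)
    show ?thesis unfolding ie by (rule ptw)
  qed
  have int: "integrable M (\<lambda>x. (cmod ((if X x \<le> a then 1 else 0) - tq cs (X x)))\<^sup>2)"
    by (rule Bochner_Integration.integrable_bound[OF ib mf]) (use le2 in \<open>auto intro!: AE_I2\<close>)
  have "(\<integral>x. (cmod ((if X x \<le> a then 1 else 0) - tq cs (X x)))\<^sup>2 \<partial>M) \<le>
        (\<integral>x. 2 * indicator {x\<in>space M. bad (X x)} x + 2 * \<eta>0\<^sup>2 \<partial>M)"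
    by (rule integral_mono[OF int ib le2])
  also have "\<dots> = 2 * measure M {x\<in>space M. bad (X x)} + 2 * \<eta>0\<^sup>2"
  proof -
    have ii: "integrable M (\<lambda>x. 2 * indicator {x\<in>space M. bad (X x)} x :: real)"
      using badm by (intro integrable_mult_right integrable_real_indicator) (auto simp: less_top[symmetric])
    have "(\<integral>x. 2 * indicator {x\<in>space M. bad (X x)} x + 2 * \<eta>0\<^sup>2 \<partial>M) =
       (\<integral>x. 2 * indicator {x\<in>space M. bad (X x)} x \<partial>M) + (\<integral>x. 2 * \<eta>0\<^sup>2 \<partial>M)"
      by (rule Bochner_Integration.integral_add[OF ii]) simp
    also have "\<dots> = 2 * measure M {x\<in>space M. bad (X x)} + 2 * \<eta>0\<^sup>2"
      using badm by (simp add: prob_space)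
    finally show ?thesis .
  qed
  also have "measure M {x\<in>space M. bad (X x)} \<le> measure M (B n) + measure M (C N1)"
    unfolding badset by (rule measure_subadditive) (use Bs Cs in auto)
  finally have "(\<integral>x. (cmod ((if X x \<le> a then 1 else 0) - tq cs (X x)))\<^sup>2 \<partial>M) \<le>
      2 * (measure M (B n) + measure M (C N1)) + 2 * \<eta>0\<^sup>2" by simp
  also have "\<dots> < e" using BR N1 eta0(3) e unfolding distrib_left by linarith
  finally show ?thesis using int bnd2 by blast
qed




context apxctx begin

definition apxB :: "real \<Rightarrow> ('x \<Rightarrow> complex) \<Rightarrow> bool" where
  "apxB K g \<longleftrightarrow> (\<forall>e>0. \<exists>p\<in>T. (\<forall>x\<in>space M. cmod (p x) \<le> K) \<and> integrable M (\<lambda>x. (cmod (g x - p x))\<^sup>2) \<and>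
                         (\<integral>x. (cmod (g x - p x))\<^sup>2 \<partial>M) < e)"

lemma apxB_apx: "apxB K g \<Longrightarrow> apx g"
  unfolding apxB_def apx_def by blast

lemma apxB_one: "apxB 1 (\<lambda>x. 1)"
  unfolding apxB_def using T_one by (intro allI impI bexI[of _ "\<lambda>x. 1"]) auto

lemma apxB_mult:
  assumes Tm: "\<And>p q. p \<in> T \<Longrightarrow> q \<in> T \<Longrightarrow> \<exists>r\<in>T. \<forall>x\<in>space M. r x = p x * q x"
    and mg: "g \<in> borel_measurable M" and mh: "h \<in> borel_measurable M"
    and g1: "\<And>x. x \<in> space M \<Longrightarrow> cmod (g x) \<le> 1"
    and K: "K \<ge> 0" "K' \<ge> 0" and ag: "apxB K g" and ah: "apxB K' h"
  shows "apxB (K * K') (\<lambda>x. g x * h x)"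
  unfolding apxB_def
proof (intro allI impI)
  fix e :: real assume e: "e > 0"
  have d: "e / (4 * (K'\<^sup>2 + 1)) > 0" using e by (simp add: add_nonneg_pos)
  obtain p where p: "p \<in> T" "\<forall>x\<in>space M. cmod (p x) \<le> K" "integrable M (\<lambda>x. (cmod (g x - p x))\<^sup>2)"
     "(\<integral>x. (cmod (g x - p x))\<^sup>2 \<partial>M) < e / (4 * (K'\<^sup>2 + 1))" using ag d unfolding apxB_def by blast
  obtain q where q: "q \<in> T" "\<forall>x\<in>space M. cmod (q x) \<le> K'" "integrable M (\<lambda>x. (cmod (h x - q x))\<^sup>2)"
     "(\<integral>x. (cmod (h x - q x))\<^sup>2 \<partial>M) < e / 4" using ah e unfolding apxB_def
    by (meson divide_pos_pos zero_less_numeral)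
  obtain r where r: "r \<in> T" "\<And>x. x \<in> space M \<Longrightarrow> r x = p x * q x" using Tm[OF p(1) q(1)] by blast
  have mr: "r \<in> borel_measurable M" using T_meas[OF r(1)] .
  have pw: "(cmod (g x * h x - r x))\<^sup>2 \<le> 2 * (cmod (h x - q x))\<^sup>2 + 2 * K'\<^sup>2 * (cmod (g x - p x))\<^sup>2"
    if x: "x \<in> space M" for x
  proof -
    have "g x * h x - r x = g x * (h x - q x) + q x * (g x - p x)" using r(2)[OF x] by (simp add: algebra_simps)
    then have "(cmod (g x * h x - r x))\<^sup>2 \<le> 2 * (cmod (g x * (h x - q x)))\<^sup>2 + 2 * (cmod (q x * (g x - p x)))\<^sup>2"
      using sq_add_le by metis
    also have "(cmod (g x * (h x - q x)))\<^sup>2 \<le> (cmod (h x - q x))\<^sup>2"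
    proof -
      have "cmod (g x * (h x - q x)) \<le> cmod (h x - q x)"
        unfolding norm_mult using g1[OF x] by (simp add: mult_left_le_one_le)
      then show ?thesis by (intro power_mono) auto
    qed
    also have "(cmod (q x * (g x - p x)))\<^sup>2 \<le> K'\<^sup>2 * (cmod (g x - p x))\<^sup>2"
    proof -
      have "cmod (q x * (g x - p x)) \<le> K' * cmod (g x - p x)"
        unfolding norm_mult using q(2) x by (intro mult_right_mono) auto
      then have "(cmod (q x * (g x - p x)))\<^sup>2 \<le> (K' * cmod (g x - p x))\<^sup>2" by (intro power_mono) auto
      then show ?thesis by (simp add: power_mult_distrib)
    qed
    finally show ?thesis by simp
  qed
  have ib: "integrable M (\<lambda>x. 2 * (cmod (h x - q x))\<^sup>2 + 2 * K'\<^sup>2 * (cmod (g x - p x))\<^sup>2)"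
    using p(3) q(3) by auto
  have mm: "(\<lambda>x. (cmod (g x * h x - r x))\<^sup>2) \<in> borel_measurable M" using mg mh mr by simp
  have int: "integrable M (\<lambda>x. (cmod (g x * h x - r x))\<^sup>2)"
    by (rule Bochner_Integration.integrable_bound[OF ib mm]) (use pw in \<open>auto intro!: AE_I2\<close>)
  have "(\<integral>x. (cmod (g x * h x - r x))\<^sup>2 \<partial>M) \<le> (\<integral>x. 2 * (cmod (h x - q x))\<^sup>2 + 2 * K'\<^sup>2 * (cmod (g x - p x))\<^sup>2 \<partial>M)"
    by (rule integral_mono_AE[OF int ib]) (use pw in \<open>auto intro!: AE_I2\<close>)
  also have "\<dots> = 2 * (\<integral>x. (cmod (h x - q x))\<^sup>2 \<partial>M) + 2 * K'\<^sup>2 * (\<integral>x. (cmod (g x - p x))\<^sup>2 \<partial>M)"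
    using p(3) q(3) by simp
  also have "\<dots> < e"
  proof -
    have "K'\<^sup>2 * (\<integral>x. (cmod (g x - p x))\<^sup>2 \<partial>M) \<le> (K'\<^sup>2 + 1) * (\<integral>x. (cmod (g x - p x))\<^sup>2 \<partial>M)"
      by (intro mult_right_mono) auto
    also have "\<dots> < e / 4"
    proof -
      have dpos: "K'\<^sup>2 + 1 > 0" by (simp add: add_nonneg_pos)
      have "(\<integral>x. (cmod (g x - p x))\<^sup>2 \<partial>M) * (K'\<^sup>2 + 1) < e / 4"
        using p(4) dpos by (simp add: pos_less_divide_eq mult.commute[of 4] divide_divide_eq_left[symmetric]) (simp add: algebra_simps)
      then show ?thesis by (simp add: mult.commute)
    qed
    finally have "K'\<^sup>2 * (\<integral>x. (cmod (g x - p x))\<^sup>2 \<partial>M) < e / 4" .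
    then show ?thesis using q(4) by (simp add: mult.assoc)
  qed
  finally have lt: "(\<integral>x. (cmod (g x * h x - r x))\<^sup>2 \<partial>M) < e" .
  have bd: "\<forall>x\<in>space M. cmod (r x) \<le> K * K'"
  proof
    fix x assume x: "x \<in> space M"
    have "cmod (p x) * cmod (q x) \<le> K * K'" using p(2) q(2) x K by (intro mult_mono) auto
    then show "cmod (r x) \<le> K * K'" using r(2)[OF x] by (simp add: norm_mult)
  qed
  show "\<exists>r\<in>T. (\<forall>x\<in>space M. cmod (r x) \<le> K * K') \<and> integrable M (\<lambda>x. (cmod (g x * h x - r x))\<^sup>2) \<and>
          (\<integral>x. (cmod (g x * h x - r x))\<^sup>2 \<partial>M) < e"
    using r(1) bd int lt by blast
qed

end



definition tp :: "(complex \<times> ('q::real_normed_vector \<Rightarrow>\<^sub>L real)) list \<Rightarrow> (('q \<Rightarrow>\<^sub>L real) \<Rightarrow> real) \<Rightarrow> complex" where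
  "tp cs x = (\<Sum>(c,l)\<leftarrow>cs. c * cis (x l))"

definition TQ :: "((('q::real_normed_vector \<Rightarrow>\<^sub>L real) \<Rightarrow> real) \<Rightarrow> complex) set" where
  "TQ = {g. \<exists>cs. \<forall>x\<in>Qhat. g x = tp cs x}"

definition AF :: "(('q::real_normed_vector \<Rightarrow>\<^sub>L real) \<times> real) set \<Rightarrow> (('q \<Rightarrow>\<^sub>L real) \<Rightarrow> real) set" where
  "AF F = {x\<in>Qhat. \<forall>p\<in>F. x (fst p) \<le> snd p}"

lemma tp_Cons: "tp ((c,l) # cs) x = c * cis (x l) + tp cs x"
  unfolding tp_def by simp

lemma tp_append: "tp (cs @ ds) x = tp cs x + tp ds x"
  unfolding tp_def by simp

lemma tp_scale: "tp (map (\<lambda>(a,l). (c * a, l)) cs) x = c * tp cs x"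
  by (induction cs) (auto simp: tp_def algebra_simps)

lemma tp_bdd: "cmod (tp cs x) \<le> (\<Sum>(c,l)\<leftarrow>cs. cmod c)"
proof (induction cs)
  case Nil then show ?case by (simp add: tp_def)
next
  case (Cons a cs)
  obtain c l where a: "a = (c,l)" by (cases a)
  have "cmod (tp (a # cs) x) \<le> cmod (c * cis (x l)) + cmod (tp cs x)"
    unfolding a tp_Cons by (rule norm_triangle_ineq)
  also have "\<dots> \<le> cmod c + (\<Sum>(c,l)\<leftarrow>cs. cmod c)" using Cons by (simp add: norm_mult)
  finally show ?case by (simp add: a)
qed

lemma tp_mult:
  assumes "linear x"
  shows "tp cs x * tp ds x = tp (map (\<lambda>((c,l),(d,l')). (c*d, l + l')) (List.product cs ds)) x"
  unfolding tp_def sum_list_prod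
  by (simp add: o_def case_prod_unfold cis_mult linear_add[OF assms] algebra_simps)

lemma tp_tq:
  assumes "linear x"
  shows "tp (map (\<lambda>(c,s). (c, s *\<^sub>R l)) cs) x = tq cs (x l)"
  by (induction cs) (auto simp: tp_def tq_def linear_scale[OF assms] mult.commute)

lemma prod_ind:
  assumes "finite F"
  shows "(\<Prod>p\<in>F. (if P p then 1 else 0 :: complex)) = (if \<forall>p\<in>F. P p then 1 else 0)"
  using assms by (induction F rule: finite_induct) auto

locale qsetting = prob_space M for M :: "(('q::real_normed_vector \<Rightarrow>\<^sub>L real) \<Rightarrow> real) measure" +
  assumes spM: "space M = Qhat" and setsM: "sets M = sigma_sets Qhat Qhat_cyl"
begin

lemma cyl_sets: "B \<in> sets borel \<Longrightarrow> {x\<in>Qhat. x l \<in> B} \<in> sets M"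
  unfolding setsM Qhat_cyl_def by (rule sigma_sets.Basic) blast

lemma meas_eval[measurable]: "(\<lambda>x. x l) \<in> borel_measurable M"
proof (rule measurableI)
  fix A :: "real set" assume "A \<in> sets borel"
  moreover have "(\<lambda>x. x l) -` A \<inter> space M = {x\<in>Qhat. x l \<in> A}" by (auto simp: spM)
  ultimately show "(\<lambda>x. x l) -` A \<inter> space M \<in> sets M" using cyl_sets by simp
qed simp

lemma tp_meas: "tp cs \<in> borel_measurable M"
proof (induction cs)
  case Nil then show ?case by (simp add: tp_def)
next
  case (Cons a cs)
  obtain c l where a: "a = (c,l)" by (cases a)
  have "(\<lambda>x. c * cis (x l)) \<in> borel_measurable M" unfolding cis_conv_exp by measurable
  then have "(\<lambda>x. c * cis (x l) + tp cs x) \<in> borel_measurable M" using Cons by measurable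
  then show ?case unfolding a tp_Cons[abs_def] by simp
qed

sublocale apxctx M TQ
proof unfold_locales
  fix g :: "(('q \<Rightarrow>\<^sub>L real) \<Rightarrow> real) \<Rightarrow> complex" assume "g \<in> TQ"
  then obtain cs where cs: "\<forall>x\<in>Qhat. g x = tp cs x" unfolding TQ_def by blast
  show "g \<in> borel_measurable M"
    using measurable_cong[of M g "tp cs"] cs tp_meas[of cs] by (simp add: spM)
  show "\<exists>K. \<forall>x\<in>space M. cmod (g x) \<le> K"
    using cs tp_bdd[of cs] by (auto simp: spM)
next
  fix g h :: "(('q \<Rightarrow>\<^sub>L real) \<Rightarrow> real) \<Rightarrow> complex" assume "g \<in> TQ" "h \<in> TQ"
  then obtain cs ds where "\<forall>x\<in>Qhat. g x = tp cs x" "\<forall>x\<in>Qhat. h x = tp ds x" unfolding TQ_def by blast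
  then show "(\<lambda>x. g x + h x) \<in> TQ" unfolding TQ_def by (intro CollectI exI[of _ "cs @ ds"]) (simp add: tp_append)
next
  fix g :: "(('q \<Rightarrow>\<^sub>L real) \<Rightarrow> real) \<Rightarrow> complex" and c assume "g \<in> TQ"
  then obtain cs where "\<forall>x\<in>Qhat. g x = tp cs x" unfolding TQ_def by blast
  then show "(\<lambda>x. c * g x) \<in> TQ" unfolding TQ_def
    by (intro CollectI exI[of _ "map (\<lambda>(a,l). (c * a, l)) cs"]) (simp add: tp_scale)
next
  show "(\<lambda>x. 1) \<in> TQ" unfolding TQ_def
    by (intro CollectI exI[of _ "[(1, 0)]"]) (auto simp: tp_def Qhat_def linear_0)
qed

lemma TQ_mult: "p \<in> TQ \<Longrightarrow> q \<in> TQ \<Longrightarrow> \<exists>r\<in>TQ. \<forall>x\<in>space M. r x = p x * q x"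
proof -
  assume "p \<in> TQ" "q \<in> TQ"
  then obtain cs ds where cs: "\<forall>x\<in>Qhat. p x = tp cs x" and ds: "\<forall>x\<in>Qhat. q x = tp ds x" unfolding TQ_def by blast
  let ?r = "tp (map (\<lambda>((c,l),(d,l')). (c*d, l + l')) (List.product cs ds))"
  have "?r \<in> TQ" unfolding TQ_def by blast
  moreover have "\<forall>x\<in>space M. ?r x = p x * q x"
    using cs ds by (auto simp: spM Qhat_def tp_mult)
  ultimately show ?thesis by blast
qed

lemma onedimQ: "apxB 2 (\<lambda>x. if x l \<le> a then 1 else 0)"
  unfolding apxB_def
proof (intro allI impI)
  fix e :: real assume e: "e > 0"
  have "\<exists>cs. (\<forall>t. cmod (tq cs t) \<le> 2) \<and>
     integrable M (\<lambda>x. (cmod ((if x l \<le> a then 1 else 0) - tq cs (x l)))\<^sup>2) \<and>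
     (\<integral>x. (cmod ((if x l \<le> a then 1 else 0) - tq cs (x l)))\<^sup>2 \<partial>M) < e"
    by (rule onedim[OF prob_space_axioms meas_eval e])
  then obtain cs where cs1: "\<forall>t. cmod (tq cs t) \<le> 2"
     and cs2: "integrable M (\<lambda>x. (cmod ((if x l \<le> a then 1 else 0) - tq cs (x l)))\<^sup>2)"
     and cs3: "(\<integral>x. (cmod ((if x l \<le> a then 1 else 0) - tq cs (x l)))\<^sup>2 \<partial>M) < e"
    by (elim exE conjE)
  have mem: "(\<lambda>x. tq cs (x l)) \<in> TQ" unfolding TQ_def
  proof (rule CollectI, rule exI[of _ "map (\<lambda>(c,s). (c, s *\<^sub>R l)) cs"], rule ballI)
    fix x :: "('q \<Rightarrow>\<^sub>L real) \<Rightarrow> real" assume "x \<in> Qhat"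
    then have "linear x" unfolding Qhat_def by simp
    then show "tq cs (x l) = tp (map (\<lambda>(c,s). (c, s *\<^sub>R l)) cs) x" by (simp only: tp_tq)
  qed
  show "\<exists>p\<in>TQ. (\<forall>x\<in>space M. cmod (p x) \<le> 2) \<and>
        integrable M (\<lambda>x. (cmod ((if x l \<le> a then 1 else 0) - p x))\<^sup>2) \<and>
        (\<integral>x. (cmod ((if x l \<le> a then 1 else 0) - p x))\<^sup>2 \<partial>M) < e"
  proof (rule bexI[OF _ mem], intro conjI)
    show "\<forall>x\<in>space M. cmod (tq cs (x l)) \<le> 2" using cs1 by simp
  qed (rule cs2, rule cs3)
qed

lemma AF_sets: "finite F \<Longrightarrow> AF F \<in> sets M"
proof (induction F rule: finite_induct)
  case empty
  have "AF {} = space M" by (simp add: AF_def spM)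
  then show ?case using sets.top by simp
next
  case (insert p F)
  have eq: "AF (insert p F) = {x\<in>Qhat. x (fst p) \<in> {..snd p}} \<inter> AF F" unfolding AF_def by auto
  have h: "{x\<in>Qhat. x (fst p) \<in> {..snd p}} \<in> sets M" by (rule cyl_sets) simp
  show ?case unfolding eq by (rule sets.Int[OF h insert.IH])
qed

lemma gen_apx: "finite F \<Longrightarrow> \<exists>K\<ge>0. apxB K (\<lambda>x. \<Prod>p\<in>F. (if x (fst p) \<le> snd p then 1 else 0))"
proof (induction F rule: finite_induct)
  case empty then show ?case by (intro exI[of _ 1]) (simp add: apxB_one)
next
  case (insert p F)
  then obtain K where K: "K \<ge> 0" "apxB K (\<lambda>x. \<Prod>p\<in>F. (if x (fst p) \<le> snd p then 1 else 0))" by blast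
  have "apxB (2 * K) (\<lambda>x. (if x (fst p) \<le> snd p then 1 else 0) * (\<Prod>p\<in>F. (if x (fst p) \<le> snd p then 1 else 0)))"
  proof (rule apxB_mult[OF TQ_mult _ _ _ _ K(1) onedimQ K(2)])
    show "(\<lambda>x. if x (fst p) \<le> snd p then 1 else 0 :: complex) \<in> borel_measurable M" by measurable
    show "(\<lambda>x. \<Prod>p\<in>F. (if x (fst p) \<le> snd p then 1 else 0 :: complex)) \<in> borel_measurable M"
      by (intro borel_measurable_prod) measurable
  qed auto
  then show ?case using insert K(1) by (intro exI[of _ "2*K"]) simp
qed

lemma apx_AF: "finite F \<Longrightarrow> apx (indicator (AF F))"
proof -
  assume F: "finite F"
  then obtain K where "apxB K (\<lambda>x. \<Prod>p\<in>F. (if x (fst p) \<le> snd p then 1 else 0))" using gen_apx by blast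
  then have "apx (\<lambda>x. \<Prod>p\<in>F. (if x (fst p) \<le> snd p then 1 else 0))" by (rule apxB_apx)
  then show ?thesis
    by (rule apx_cong) (auto simp: prod_ind[OF F] AF_def indicator_def spM)
qed

lemma sets_gen: "sets M = sigma_sets (space M) {AF F | F. finite F}"
proof -
  let ?G = "{AF F | F. finite F} :: (('q \<Rightarrow>\<^sub>L real \<Rightarrow> real) set) set"
  have GP: "?G \<subseteq> Pow Qhat" unfolding AF_def by auto
  have "?G \<subseteq> sigma_sets Qhat Qhat_cyl" using AF_sets setsM by auto
  then have 1: "sigma_sets Qhat ?G \<subseteq> sigma_sets Qhat Qhat_cyl" by (rule sigma_sets_mono)
  define N where "N = sigma Qhat ?G"
  have spN: "space N = Qhat" and sN: "sets N = sigma_sets Qhat ?G"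
    unfolding N_def using GP by (auto simp: space_measure_of sets_measure_of)
  have "Qhat_cyl \<subseteq> sigma_sets Qhat ?G"
  proof
    fix A :: "('q \<Rightarrow>\<^sub>L real \<Rightarrow> real) set" assume "A \<in> Qhat_cyl"
    then obtain l :: "'q \<Rightarrow>\<^sub>L real" and B where A: "A = {x\<in>Qhat. x l \<in> B}" "B \<in> sets borel" unfolding Qhat_cyl_def by blast
    have "(\<lambda>x. x l) \<in> borel_measurable N"
    proof (rule borel_measurableI_le)
      fix y
      have "{x\<in>space N. x l \<le> y} = AF {(l,y)}" unfolding AF_def spN by auto
      then show "{x\<in>space N. x l \<le> y} \<in> sets N" unfolding sN by (auto intro!: sigma_sets.Basic)
    qed
    from measurable_sets[OF this A(2)] have "(\<lambda>x. x l) -` B \<inter> space N \<in> sets N" .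
    moreover have "(\<lambda>x. x l) -` B \<inter> space N = A" unfolding A spN by auto
    ultimately show "A \<in> sigma_sets Qhat ?G" using sN by simp
  qed
  then have 2: "sigma_sets Qhat Qhat_cyl \<subseteq> sigma_sets Qhat ?G" by (rule sigma_sets_mono)
  have eqs: "sigma_sets Qhat Qhat_cyl = sigma_sets Qhat ?G" by (rule antisym[OF 2 1])
  show ?thesis unfolding setsM spM by (rule eqs)
qed

lemma AF_Int: "AF F \<inter> AF F' = AF (F \<union> F')"
  unfolding AF_def by auto

lemma apx_everything:
  assumes "f \<in> borel_measurable M" "integrable M (\<lambda>x. (cmod (f x))\<^sup>2)"
  shows "apx f"
proof -
  let ?G = "{AF F | F. finite F} :: (('q \<Rightarrow>\<^sub>L real \<Rightarrow> real) set) set"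
  have IS: "Int_stable ?G" unfolding Int_stable_def
  proof (intro ballI)
    fix a b assume "a \<in> ?G" "b \<in> ?G"
    then obtain F F' where FF: "a = AF F" "b = AF F'" "finite F" "finite F'" by blast
    then have "a \<inter> b = AF (F \<union> F')" "finite (F \<union> F')" using AF_Int by auto
    then show "a \<inter> b \<in> ?G" by blast
  qed
  have GP: "?G \<subseteq> Pow (space M)" unfolding AF_def spM by auto
  have GA: "\<And>A. A \<in> ?G \<Longrightarrow> apx (indicator A)" using apx_AF by blast
  have "apx (indicator A)" if AM: "A \<in> sets M" for A
    by (rule apx_sets[OF IS GP sets_gen GA AM])
  then show ?thesis using apx_all[OF _ assms] by blast
qed

end



lemma conv_list:
  fixes B :: "'z \<Rightarrow> (('q::real_normed_vector \<Rightarrow>\<^sub>L real) \<Rightarrow> real) \<Rightarrow> complex"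
  assumes ex: "\<And>l. \<exists>\<zeta> k. k \<noteq> 0 \<and> (\<forall>x\<in>Qhat. B \<zeta> x = k * cis (x l))"
  shows "\<exists>S c. finite S \<and> (\<forall>x\<in>Qhat. tp cs x = (\<Sum>\<zeta>\<in>S. c \<zeta> * B \<zeta> x))"
proof (induction cs)
  case Nil then show ?case by (intro exI[of _ "{}"]) (simp add: tp_def)
next
  case (Cons p cs)
  obtain a l where p: "p = (a,l)" by (cases p)
  obtain S c where S: "finite S" "\<forall>x\<in>Qhat. tp cs x = (\<Sum>\<zeta>\<in>S. c \<zeta> * B \<zeta> x)" using Cons by blast
  obtain z k where zk: "k \<noteq> 0" "\<forall>x\<in>Qhat. B z x = k * cis (x l)" using ex[of l] by blast
  define c' where "c' = c(z := (if z \<in> S then c z else 0) + a / k)"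
  show ?case
  proof (intro exI[of _ "insert z S"] exI[of _ c'] conjI ballI)
    show "finite (insert z S)" using S(1) by simp
    fix x :: "('q \<Rightarrow>\<^sub>L real) \<Rightarrow> real" assume x: "x \<in> Qhat"
    have e1: "(\<Sum>\<zeta>\<in>insert z S. c' \<zeta> * B \<zeta> x) = c' z * B z x + (\<Sum>\<zeta>\<in>S - {z}. c' \<zeta> * B \<zeta> x)"
      using S(1) by (rule sum.insert_remove)
    have e2: "(\<Sum>\<zeta>\<in>S - {z}. c' \<zeta> * B \<zeta> x) = (\<Sum>\<zeta>\<in>S - {z}. c \<zeta> * B \<zeta> x)"
      unfolding c'_def by (rule sum.cong) auto
    have e3: "(\<Sum>\<zeta>\<in>S. c \<zeta> * B \<zeta> x) = (if z \<in> S then c z * B z x else 0) + (\<Sum>\<zeta>\<in>S - {z}. c \<zeta> * B \<zeta> x)"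
    proof (cases "z \<in> S")
      case True then show ?thesis using S(1) by (simp add: sum.remove)
    next
      case False then show ?thesis by simp
    qed
    have "tp (p # cs) x = a * cis (x l) + tp cs x" unfolding p by (rule tp_Cons)
    also have "a * cis (x l) = (a / k) * B z x" using zk x by simp
    also have "tp cs x = (\<Sum>\<zeta>\<in>S. c \<zeta> * B \<zeta> x)" using S(2) x by simp
    finally have t: "tp (p # cs) x = (a / k) * B z x + (\<Sum>\<zeta>\<in>S. c \<zeta> * B \<zeta> x)" .
    have "(\<Sum>\<zeta>\<in>insert z S. c' \<zeta> * B \<zeta> x) = (a / k) * B z x + (\<Sum>\<zeta>\<in>S. c \<zeta> * B \<zeta> x)"
      unfolding e1 e2 e3 by (cases "z \<in> S") (simp_all add: c'_def algebra_simps)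
    then show "tp (p # cs) x = (\<Sum>\<zeta>\<in>insert z S. c' \<zeta> * B \<zeta> x)" using t by simp
  qed
qed

lemma Blinfun_zero: "Blinfun (\<lambda>_. 0) = 0"
  by (rule blinfun_eqI) (simp add: bounded_linear_Blinfun_apply)

lemma Blinfun_neg: "Blinfun (\<lambda>\<phi>. - blinfun_apply l \<phi>) = - l"
  by (rule blinfun_eqI) (simp add: bounded_linear_Blinfun_apply bounded_linear_minus blinfun.bounded_linear_right uminus_blinfun.rep_eq)

lemma beta_exp:
  fixes vadd :: "'a \<Rightarrow> 'l::real_vector \<Rightarrow> 'a"
    and \<theta> :: "'a \<Rightarrow> 'l \<Rightarrow> real"
    and br :: "'l \<Rightarrow> 'l \<Rightarrow> real"
    and q :: "'l \<Rightarrow> 'q::real_inner"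
    and \<Omega> :: "'q \<Rightarrow> 'q \<Rightarrow> complex"
    and l :: "'q \<Rightarrow>\<^sub>L real"
  assumes aff: "affine_action vadd"
    and br_bilin: "bilinear br"
    and dirsum2: "\<forall>\<xi>. \<exists>m\<in>Mset br. \<exists>n\<in>Nset br. \<xi> = m + n"
    and q3: "\<forall>\<tau>. q \<tau> = 0 \<longleftrightarrow> \<tau> \<in> Mset br"
    and Omega_bilin: "bilinear \<Omega>"
    and brQ_all: "\<forall>f :: 'q \<Rightarrow> real. linear f \<and> continuous_on UNIV f \<longrightarrow>
                    (\<exists>\<xi>. \<forall>\<phi>. f \<phi> = brQ br q \<xi> \<phi>)"
  shows "\<exists>\<zeta> k. k \<noteq> 0 \<and> (\<forall>x\<in>Qhat. betahat vadd \<theta> br q \<Omega> \<zeta> \<eta> x = k * cis (x l))"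
proof -
  have bl: "bounded_linear (\<lambda>\<phi>. - blinfun_apply l \<phi>)"
    by (simp add: bounded_linear_minus blinfun.bounded_linear_right)
  have "linear (\<lambda>\<phi>. - blinfun_apply l \<phi>) \<and> continuous_on UNIV (\<lambda>\<phi>. - blinfun_apply l \<phi>)"
    using bl by (simp add: bounded_linear.linear linear_continuous_on)
  then obtain \<xi> where xi: "\<And>\<phi>. - blinfun_apply l \<phi> = brQ br q \<xi> \<phi>" using brQ_all by blast
  obtain m n where mn: "m \<in> Mset br" "n \<in> Nset br" "\<xi> = m + n" using dirsum2 by blast
  have bm: "brQ br q m = (\<lambda>\<phi>. - blinfun_apply l \<phi>)"
  proof
    fix \<phi>
    have "brQ br q \<xi> \<phi> = br m (SOME \<tau>. q \<tau> = \<phi>) + br n (SOME \<tau>. q \<tau> = \<phi>)"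
      unfolding brQ_def mn(3) by (rule bilinear_ladd[OF br_bilin])
    also have "br n (SOME \<tau>. q \<tau> = \<phi>) = 0" using mn(2) unfolding Nset_def by auto
    finally show "brQ br q m \<phi> = - blinfun_apply l \<phi>" using xi[of \<phi>] unfolding brQ_def by simp
  qed
  define \<zeta> where "\<zeta> = vadd \<eta> (- m)"
  have ex1: "\<exists>!u. vadd \<zeta> u = \<eta>" using aff unfolding affine_action_def by blast
  have "vadd \<zeta> m = \<eta>" using aff unfolding affine_action_def \<zeta>_def by simp
  then have vs: "vsub vadd \<eta> \<zeta> = m" unfolding vsub_def by (rule the1_equality[OF ex1])
  have qm: "q m = 0" using q3 mn(1) by simp
  have O0: "\<Omega> 0 \<phi> = 0" for \<phi> by (rule bilinear_lzero[OF Omega_bilin])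
  show ?thesis
  proof (intro exI[of _ \<zeta>] exI[of _ "exp (\<i> * complex_of_real (\<theta> \<zeta> m))"] conjI ballI)
    show "exp (\<i> * complex_of_real (\<theta> \<zeta> m)) \<noteq> 0" by simp
    fix x :: "('q \<Rightarrow>\<^sub>L real) \<Rightarrow> real" assume x: "x \<in> Qhat"
    then have lx: "linear x" unfolding Qhat_def by simp
    have "betahat vadd \<theta> br q \<Omega> \<zeta> \<eta> x =
       exp (\<i> * complex_of_real (\<theta> \<zeta> m) - 0 - \<i> * complex_of_real (x (- l)) -
            (complex_of_real (x 0) + \<i> * complex_of_real (x 0)))"
    proof -
      have iz: "(\<lambda>\<phi>. inner (0::'q) \<phi>) = (\<lambda>_. 0)" by (rule ext) simp
      show ?thesis unfolding betahat_def Let_def vs qm bm O0 iz by (simp add: Blinfun_zero Blinfun_neg)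
    qed
    also have "\<dots> = exp (\<i> * complex_of_real (\<theta> \<zeta> m) + \<i> * complex_of_real (x l))"
      using lx by (simp add: linear_0 linear_neg)
    also have "\<dots> = exp (\<i> * complex_of_real (\<theta> \<zeta> m)) * cis (x l)"
      by (simp add: exp_add cis_conv_exp)
    finally show "betahat vadd \<theta> br q \<Omega> \<zeta> \<eta> x = exp (\<i> * complex_of_real (\<theta> \<zeta> m)) * cis (x l)" .
  qed
qed


theorem proposition4p4:
  fixes vadd :: "'a \<Rightarrow> 'l::real_vector \<Rightarrow> 'a"
    and \<theta> :: "'a \<Rightarrow> 'l \<Rightarrow> real"
    and br :: "'l \<Rightarrow> 'l \<Rightarrow> real"
    and q :: "'l \<Rightarrow> 'q::{real_inner, polish_space}"
    and \<Omega> :: "'q \<Rightarrow> 'q \<Rightarrow> complex"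
    and \<nu> :: "(('q \<Rightarrow>\<^sub>L real) \<Rightarrow> real) measure"
    and \<eta> :: 'a
  assumes aff: "affine_action vadd"
    and theta_lin: "\<forall>\<zeta>. linear (\<theta> \<zeta>)"
    and br_bilin: "bilinear br"
    and theta_shift: "\<forall>\<eta>' \<xi> \<tau>. \<theta> (vadd \<eta>' \<xi>) \<tau> = \<theta> \<eta>' \<tau> + br \<xi> \<tau>"
    and omega_nondeg: "\<forall>\<xi>. (\<forall>\<xi>'. omega br \<xi> \<xi>' = 0) \<longrightarrow> \<xi> = 0"
    and dirsum: "Mset br \<inter> Nset br = {0}"
                "\<forall>\<xi>. \<exists>m\<in>Mset br. \<exists>n\<in>Nset br. \<xi> = m + n"
    and q_quot: "linear q" "surj q" "\<forall>\<tau>. q \<tau> = 0 \<longleftrightarrow> \<tau> \<in> Mset br"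
    and Omega_bilin: "bilinear \<Omega>"
    and Omega_sym: "\<forall>\<phi> \<psi>. \<Omega> \<phi> \<psi> = \<Omega> \<psi> \<phi>"
    and Re_Omega: "\<forall>\<phi> \<psi>. Re (\<Omega> \<phi> \<psi>) = inner \<phi> \<psi>"
    and Im_Omega_cont: "continuous_on UNIV (\<lambda>(\<phi>, \<psi>). Im (\<Omega> \<phi> \<psi>))"
    and brQ_cont: "\<forall>\<xi>. continuous_on UNIV (brQ br q \<xi>)"
    and brQ_all: "\<forall>f :: 'q \<Rightarrow> real. linear f \<and> continuous_on UNIV f \<longrightarrow>
                    (\<exists>\<xi>. \<forall>\<phi>. f \<phi> = brQ br q \<xi> \<phi>)"
    and nu_space: "space \<nu> = Qhat"
    and nu_sets: "sets \<nu> = sigma_sets Qhat Qhat_cyl"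
    and nu_prob: "prob_space \<nu>"
    and nu_char: "\<forall>l :: 'q \<Rightarrow>\<^sub>L real.
                    (\<integral>x. exp (\<i> * of_real (x l)) \<partial>\<nu>) = of_real (exp (- (norm l)\<^sup>2 / 4))"
  shows "\<forall>f \<in> borel_measurable \<nu>. integrable \<nu> (\<lambda>x. (cmod (f x))\<^sup>2) \<longrightarrow>
           (\<forall>e > 0. \<exists>S c. finite S \<and>
              integrable \<nu> (\<lambda>x. (cmod (f x - (\<Sum>\<zeta>\<in>S. c \<zeta> * betahat vadd \<theta> br q \<Omega> \<zeta> \<eta> x)))\<^sup>2) \<and>
              (\<integral>x. (cmod (f x - (\<Sum>\<zeta>\<in>S. c \<zeta> * betahat vadd \<theta> br q \<Omega> \<zeta> \<eta> x)))\<^sup>2 \<partial>\<nu>) < e)"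
proof -
  interpret Q: qsetting \<nu>
    unfolding qsetting_def qsetting_axioms_def using nu_prob nu_space nu_sets by blast
  have ex: "\<And>l. \<exists>\<zeta> k. k \<noteq> 0 \<and> (\<forall>x\<in>Qhat. betahat vadd \<theta> br q \<Omega> \<zeta> \<eta> x = k * cis (x l))"
    by (rule beta_exp[OF aff br_bilin dirsum(2) q_quot(3) Omega_bilin brQ_all])
  show ?thesis
  proof (intro ballI impI allI)
    fix f :: "(('q \<Rightarrow>\<^sub>L real) \<Rightarrow> real) \<Rightarrow> complex" and e :: real
    assume mf: "f \<in> borel_measurable \<nu>" and sq: "integrable \<nu> (\<lambda>x. (cmod (f x))\<^sup>2)" and e: "e > 0"
    have "Q.apx f" by (rule Q.apx_everything[OF mf sq])
    then obtain p where p: "p \<in> TQ" "integrable \<nu> (\<lambda>x. (cmod (f x - p x))\<^sup>2)"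
      "(\<integral>x. (cmod (f x - p x))\<^sup>2 \<partial>\<nu>) < e" using e unfolding Q.apx_def by blast
    obtain cs where cs: "\<forall>x\<in>Qhat. p x = tp cs x" using p(1) unfolding TQ_def by blast
    obtain S c where S: "finite S" "\<forall>x\<in>Qhat. tp cs x = (\<Sum>\<zeta>\<in>S. c \<zeta> * betahat vadd \<theta> br q \<Omega> \<zeta> \<eta> x)"
      using conv_list[OF ex] by blast
    have eqp: "\<And>x. x \<in> space \<nu> \<Longrightarrow> (cmod (f x - p x))\<^sup>2 = (cmod (f x - (\<Sum>\<zeta>\<in>S. c \<zeta> * betahat vadd \<theta> br q \<Omega> \<zeta> \<eta> x)))\<^sup>2"
      using cs S(2) nu_space by auto
    have ieq: "integrable \<nu> (\<lambda>x. (cmod (f x - p x))\<^sup>2) = integrable \<nu> (\<lambda>x. (cmod (f x - (\<Sum>\<zeta>\<in>S. c \<zeta> * betahat vadd \<theta> br q \<Omega> \<zeta> \<eta> x)))\<^sup>2)"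
      by (rule Bochner_Integration.integrable_cong[OF refl eqp])
    have leq: "(\<integral>x. (cmod (f x - p x))\<^sup>2 \<partial>\<nu>) = (\<integral>x. (cmod (f x - (\<Sum>\<zeta>\<in>S. c \<zeta> * betahat vadd \<theta> br q \<Omega> \<zeta> \<eta> x)))\<^sup>2 \<partial>\<nu>)"
      by (rule Bochner_Integration.integral_cong[OF refl eqp])
    have i2: "integrable \<nu> (\<lambda>x. (cmod (f x - (\<Sum>\<zeta>\<in>S. c \<zeta> * betahat vadd \<theta> br q \<Omega> \<zeta> \<eta> x)))\<^sup>2)"
      using p(2) ieq by simp
    have l2: "(\<integral>x. (cmod (f x - (\<Sum>\<zeta>\<in>S. c \<zeta> * betahat vadd \<theta> br q \<Omega> \<zeta> \<eta> x)))\<^sup>2 \<partial>\<nu>) < e"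
      using p(3) leq by simp
    show "\<exists>S c. finite S \<and>
              integrable \<nu> (\<lambda>x. (cmod (f x - (\<Sum>\<zeta>\<in>S. c \<zeta> * betahat vadd \<theta> br q \<Omega> \<zeta> \<eta> x)))\<^sup>2) \<and>
              (\<integral>x. (cmod (f x - (\<Sum>\<zeta>\<in>S. c \<zeta> * betahat vadd \<theta> br q \<Omega> \<zeta> \<eta> x)))\<^sup>2 \<partial>\<nu>) < e"
      by (intro exI[of _ S] exI[of _ c] conjI) (rule S(1), rule i2, rule l2)
  qed
qed


end
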